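(* Let $\varphi:\mathbb{R}^d\to\mathbb{R}^p$ be any feature map and $z_1,\dots,z_N\in\mathbb{R}^d$ training inputs with labels $G=(g_1,\dots,g_N)\in\mathbb{R}^N$, such that the kernel $K=\Phi\Phi^\top\in\mathbb{R}^{N\times N}$ is invertible, where $\Phi\in\mathbb{R}^{N\times p}$ has $i$-th row $\varphi(z_i)^\top$. Let $\Phi_{-1}\in\mathbb{R}^{(N-1)\times p}$ be $\Phi$ with its first row removed, $P_{\Phi_{-1}}$ the orthogonal projector onto the span of the rows of $\Phi_{-1}$, and $P^\perp_{\Phi_{-1}}=I-P_{\Phi_{-1}}$. Then $\|P^\perp_{\Phi_{-1}}\varphi(z_1)\|_2\neq 0$, and for every $z\in\mathbb{R}^d$, $$\mathcal S_{z_1}(z)=\mathcal F_\varphi(z,z_1)\,\mathcal S_{z_1}(z_1),\qquad\text{where }\ \mathcal F_\varphi(z,z_1):=\frac{\varphi(z)^\top P^\perp_{\Phi_{-1}}\varphi(z_1)}{\|P^\perp_{\Phi_{-1}}\varphi(z_1)\|_2^2}.$$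
   Context: Model: $f(z,\theta)=\varphi(z)^\top\theta$, $\theta\in\mathbb{R}^p$. Given an initialization $\theta_0\in\mathbb{R}^p$, the trained parameters are $\theta^*=\theta_0+\Phi^+(G-\Phi\theta_0)$ with $\Phi^+=\Phi^\top K^{-1}$ (the Moore–Penrose inverse). With $Z_{-1},G_{-1}$ the data and labels without the first pair, $\theta^*_{-1}=\theta_0+\Phi_{-1}^+(G_{-1}-\Phi_{-1}\theta_0)$, where $\Phi_{-1}^+=\Phi_{-1}^\top(\Phi_{-1}\Phi_{-1}^\top)^{-1}$. The stability with respect to $z_1$ is the function $\mathcal S_{z_1}(z):=f(z,\theta^* )-f(z,\theta^*_{-1})$. *)

theory Defs
  imports "Jordan_Normal_Form.Matrix"
begin

definition minv :: "real mat \<Rightarrow> real mat" where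
  "minv A = (SOME B. B \<in> carrier_mat (dim_row A) (dim_row A) \<and> inverts_mat A B \<and> inverts_mat B A)"

text \<open>Moore--Penrose inverse of a full-row-rank matrix: Phi^+ = Phi^T (Phi Phi^T)^{-1}.\<close>
definition pinv :: "real mat \<Rightarrow> real mat" where
  "pinv Phi = transpose_mat Phi * minv (Phi * transpose_mat Phi)"

definition vnorm :: "real vec \<Rightarrow> real" where
  "vnorm v = sqrt (v \<bullet> v)"

definition feat_mat :: "nat \<Rightarrow> nat \<Rightarrow> (real vec \<Rightarrow> real vec) \<Rightarrow> (nat \<Rightarrow> real vec) \<Rightarrow> real mat" where
  "feat_mat N p phi zs = mat N p (\<lambda>(i, j). phi (zs i) $ j)"

definition drop_first_row :: "real mat \<Rightarrow> real mat" where
  "drop_first_row A = mat (dim_row A - 1) (dim_col A) (\<lambda>(i, j). A $$ (i + 1, j))"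

definition drop_first :: "real vec \<Rightarrow> real vec" where
  "drop_first v = vec (dim_vec v - 1) (\<lambda>i. v $ (i + 1))"

definition row_span :: "real mat \<Rightarrow> real vec set" where
  "row_span A = {transpose_mat A *\<^sub>v c | c. c \<in> carrier_vec (dim_row A)}"

definition is_orth_projector :: "nat \<Rightarrow> real mat \<Rightarrow> real vec set \<Rightarrow> bool" where
  "is_orth_projector p P S \<longleftrightarrow> P \<in> carrier_mat p p \<and> P * P = P \<and> transpose_mat P = P
     \<and> {P *\<^sub>v v | v. v \<in> carrier_vec p} = S"

definition fmodel :: "(real vec \<Rightarrow> real vec) \<Rightarrow> real vec \<Rightarrow> real vec \<Rightarrow> real" where
  "fmodel phi z theta = phi z \<bullet> theta"

definition trained :: "real mat \<Rightarrow> real vec \<Rightarrow> real vec \<Rightarrow> real vec" where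
  "trained Phi G theta0 = theta0 + pinv Phi *\<^sub>v (G - Phi *\<^sub>v theta0)"

text \<open>Stability with respect to the first training point (index 0).\<close>
definition stability :: "nat \<Rightarrow> nat \<Rightarrow> (real vec \<Rightarrow> real vec) \<Rightarrow> (nat \<Rightarrow> real vec)
    \<Rightarrow> real vec \<Rightarrow> real vec \<Rightarrow> real vec \<Rightarrow> real" where
  "stability N p phi zs G theta0 z =
     fmodel phi z (trained (feat_mat N p phi zs) G theta0)
     - fmodel phi z (trained (drop_first_row (feat_mat N p phi zs)) (drop_first G) theta0)"

end

theory Submission imports Defs "Jordan_Normal_Form.Determinant" begin

lemma minv_props:
  assumes A: "A \<in> carrier_mat n n" and B: "B \<in> carrier_mat n n" "A * B = 1\<^sub>m n" "B * A = 1\<^sub>m n"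
  shows "minv A \<in> carrier_mat n n \<and> A * minv A = 1\<^sub>m n \<and> minv A * A = 1\<^sub>m n"
proof -
  have "\<exists>B. B \<in> carrier_mat (dim_row A) (dim_row A) \<and> inverts_mat A B \<and> inverts_mat B A"
    using A B unfolding inverts_mat_def by auto
  from someI_ex[OF this] show ?thesis using A unfolding minv_def inverts_mat_def by auto
qed

lemma invertible_ex:
  assumes "invertible_mat A" "A \<in> carrier_mat n n"
  shows "\<exists>B. B \<in> carrier_mat n n \<and> A * B = 1\<^sub>m n \<and> B * A = 1\<^sub>m n"
proof -
  from assms obtain B where AB: "A * B = 1\<^sub>m (dim_row A)" "B * A = 1\<^sub>m (dim_row B)"
    unfolding invertible_mat_def inverts_mat_def by auto
  have "dim_col B = n" using AB(1) assms(2) by (metis index_mult_mat(3) index_one_mat(3) carrier_matD(1))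
  moreover have "dim_row B = n" using AB(2) assms(2) by (metis index_mult_mat(3) index_one_mat(3) carrier_matD(2))
  ultimately show ?thesis using AB assms(2) by (intro exI[of _ B]) auto
qed

lemma kernel_ex:
  fixes A :: "real mat"
  assumes A: "A \<in> carrier_mat n n" and ker: "\<And>v. v \<in> carrier_vec n \<Longrightarrow> A *\<^sub>v v = 0\<^sub>v n \<Longrightarrow> v = 0\<^sub>v n"
  shows "\<exists>B. B \<in> carrier_mat n n \<and> A * B = 1\<^sub>m n \<and> B * A = 1\<^sub>m n"
proof -
  have "det A \<noteq> 0" using det_0_iff_vec_prod_zero[OF A] ker by auto
  from det_non_zero_imp_unit[OF A this, of undefined] show ?thesis
    unfolding Units_def ring_mat_def by auto
qed

lemma dot_self_nonneg: "(v::real vec) \<bullet> v \<ge> 0"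
  unfolding scalar_prod_def by (auto intro: sum_nonneg)

lemma dot_self_zero: assumes "(v::real vec) \<bullet> v = 0" "v \<in> carrier_vec n" shows "v = 0\<^sub>v n"
proof -
  have "\<forall>i\<in>{0..<dim_vec v}. v $ i * v $ i = 0"
    using assms(1) unfolding scalar_prod_def by (subst sum_nonneg_eq_0_iff[symmetric]) auto
  then show ?thesis using assms(2) by (intro eq_vecI) auto
qed

lemma drop_first_row_carrier: "A \<in> carrier_mat n m \<Longrightarrow> drop_first_row A \<in> carrier_mat (n - 1) m"
  unfolding drop_first_row_def by auto

lemma drop_first_carrier: "x \<in> carrier_vec n \<Longrightarrow> drop_first x \<in> carrier_vec (n - 1)"
  unfolding drop_first_def by auto

lemma drop_mult: assumes "A \<in> carrier_mat n m" "y \<in> carrier_vec m"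
  shows "drop_first_row A *\<^sub>v y = drop_first (A *\<^sub>v y)"
  using assms by (intro eq_vecI) (auto simp: drop_first_row_def drop_first_def row_def scalar_prod_def)

lemma drop_minus: assumes "a \<in> carrier_vec n" "b \<in> carrier_vec n"
  shows "drop_first (a - b) = drop_first a - drop_first b"
  using assms by (intro eq_vecI) (auto simp: drop_first_def)

lemma transpose_split:
  fixes A :: "real mat"
  assumes A: "A \<in> carrier_mat n m" and n: "n \<ge> 1" and x: "x \<in> carrier_vec n"
  shows "transpose_mat A *\<^sub>v x = x $ 0 \<cdot>\<^sub>v row A 0 + transpose_mat (drop_first_row A) *\<^sub>v drop_first x"
proof (rule eq_vecI)
  show "dim_vec (transpose_mat A *\<^sub>v x) = dim_vec (x $ 0 \<cdot>\<^sub>v row A 0 + transpose_mat (drop_first_row A) *\<^sub>v drop_first x)"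
    using A by (simp add: drop_first_row_def)
  fix j assume j: "j < dim_vec (x $ 0 \<cdot>\<^sub>v row A 0 + transpose_mat (drop_first_row A) *\<^sub>v drop_first x)"
  then have jm: "j < m" using A by (simp add: drop_first_row_def)
  obtain k where k: "n = Suc k" using n by (cases n) auto
  have "(transpose_mat A *\<^sub>v x) $ j = (\<Sum>i<n. A $$ (i, j) * x $ i)"
    using A x jm by (simp add: scalar_prod_def row_def col_def atLeast0LessThan)
  also have "\<dots> = A $$ (0, j) * x $ 0 + (\<Sum>i<k. A $$ (Suc i, j) * x $ (Suc i))"
    unfolding k by (rule sum.lessThan_Suc_shift)
  also have "\<dots> = (x $ 0 \<cdot>\<^sub>v row A 0 + transpose_mat (drop_first_row A) *\<^sub>v drop_first x) $ j"
    using A x jm k by (simp add: scalar_prod_def row_def col_def drop_first_row_def drop_first_def atLeast0LessThan)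
  finally show "(transpose_mat A *\<^sub>v x) $ j = (x $ 0 \<cdot>\<^sub>v row A 0 + transpose_mat (drop_first_row A) *\<^sub>v drop_first x) $ j" .
qed

lemma mult_zero_vec: "A \<in> carrier_mat n m \<Longrightarrow> A *\<^sub>v 0\<^sub>v m = (0\<^sub>v n :: real vec)"
  by (intro eq_vecI) (auto simp: scalar_prod_def)

lemma zero_smult_vec: "v \<in> carrier_vec n \<Longrightarrow> (0::real) \<cdot>\<^sub>v v = 0\<^sub>v n"
  by (intro eq_vecI) auto

lemma ker_zero:
  fixes K :: "real mat"
  assumes K: "K \<in> carrier_mat n n" and M: "M \<in> carrier_mat n n" "M * K = 1\<^sub>m n"
    and x: "x \<in> carrier_vec n" and Kx: "K *\<^sub>v x = 0\<^sub>v n"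
  shows "x = 0\<^sub>v (n::nat)"
proof -
  have "x = (M * K) *\<^sub>v x" using M(2) one_mult_mat_vec[OF x] by simp
  also have "\<dots> = M *\<^sub>v (K *\<^sub>v x)" by (rule assoc_mult_mat_vec[OF M(1) K x])
  finally show ?thesis using Kx M by (simp add: mult_zero_vec)
qed

theorem lemma1:
  fixes d p N :: nat and phi :: "real vec \<Rightarrow> real vec" and zs :: "nat \<Rightarrow> real vec"
    and G theta0 :: "real vec" and P :: "real mat"
  assumes N1: "N \<ge> 1"
    and phi_dim: "\<And>z. z \<in> carrier_vec d \<Longrightarrow> phi z \<in> carrier_vec p"
    and zs_dim: "\<And>i. i < N \<Longrightarrow> zs i \<in> carrier_vec d"
    and G_dim: "G \<in> carrier_vec N"
    and theta0_dim: "theta0 \<in> carrier_vec p"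
    and K_inv: "invertible_mat (feat_mat N p phi zs * transpose_mat (feat_mat N p phi zs))"
    and P_proj: "is_orth_projector p P (row_span (drop_first_row (feat_mat N p phi zs)))"
  shows "vnorm ((1\<^sub>m p - P) *\<^sub>v phi (zs 0)) \<noteq> 0
    \<and> (\<forall>z \<in> carrier_vec d.
         stability N p phi zs G theta0 z
         = (phi z \<bullet> ((1\<^sub>m p - P) *\<^sub>v phi (zs 0))) / (vnorm ((1\<^sub>m p - P) *\<^sub>v phi (zs 0)))\<^sup>2
           * stability N p phi zs G theta0 (zs 0))"
proof -
  define F where "F = feat_mat N p phi zs"
  define F1 where "F1 = drop_first_row F"
  define f1 where "f1 = phi (zs 0)"
  define K where "K = F * transpose_mat F"
  define K1 where "K1 = F1 * transpose_mat F1"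
  have F: "F \<in> carrier_mat N p" unfolding F_def feat_mat_def by auto
  have F1: "F1 \<in> carrier_mat (N - 1) p" unfolding F1_def using drop_first_row_carrier[OF F] .
  have f1: "f1 \<in> carrier_vec p" unfolding f1_def using N1 zs_dim phi_dim by auto
  have rowF: "row F 0 = f1" using f1 N1 unfolding F_def feat_mat_def f1_def
    by (intro eq_vecI) auto
  have K: "K \<in> carrier_mat N N" unfolding K_def using F by auto
  have K1: "K1 \<in> carrier_mat (N - 1) (N - 1)" unfolding K1_def using F1 by auto
  have Pc: "P \<in> carrier_mat p p" and PP: "P * P = P" and PT: "transpose_mat P = P"
    and Prange: "{P *\<^sub>v v | v. v \<in> carrier_vec p} = row_span F1"
    using P_proj unfolding is_orth_projector_def F1_def F_def by auto
  have split: "transpose_mat F *\<^sub>v x = x $ 0 \<cdot>\<^sub>v f1 + transpose_mat F1 *\<^sub>v drop_first x"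
    if "x \<in> carrier_vec N" for x
    using transpose_split[OF F N1 that] rowF unfolding F1_def by simp
  obtain M where M: "M \<in> carrier_mat N N" "K * M = 1\<^sub>m N" "M * K = 1\<^sub>m N"
    using invertible_ex[OF K_inv[folded F_def, folded K_def] K] by auto
  have minvK: "minv K \<in> carrier_mat N N \<and> K * minv K = 1\<^sub>m N \<and> minv K * K = 1\<^sub>m N"
    using minv_props[OF K M] .
  have Kker: "x = 0\<^sub>v N" if "x \<in> carrier_vec N" "transpose_mat F *\<^sub>v x = 0\<^sub>v p" for x
  proof -
    have "K *\<^sub>v x = F *\<^sub>v (transpose_mat F *\<^sub>v x)" unfolding K_def using F that by (simp add: assoc_mult_mat_vec)
    also have "\<dots> = 0\<^sub>v N" using that F by (simp add: mult_zero_vec)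
    finally show ?thesis using ker_zero[OF K M(1) M(3) that(1)] by simp
  qed
  have K1ker: "c = 0\<^sub>v (N - 1)" if c: "c \<in> carrier_vec (N - 1)" "K1 *\<^sub>v c = 0\<^sub>v (N - 1)" for c
  proof -
    define t where "t = transpose_mat F1 *\<^sub>v c"
    have t: "t \<in> carrier_vec p" unfolding t_def using F1 c by auto
    have "K1 *\<^sub>v c = F1 *\<^sub>v t" unfolding K1_def t_def using F1 c by (simp add: assoc_mult_mat_vec)
    have "t \<bullet> t = c \<bullet> (F1 *\<^sub>v t)" unfolding t_def
      using transpose_vec_mult_scalar[OF F1 _ c(1)] t t_def by simp
    also have "\<dots> = 0" using c \<open>K1 *\<^sub>v c = F1 *\<^sub>v t\<close> by simp
    finally have t0: "t = 0\<^sub>v p" using dot_self_zero t by blast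
    define x where "x = vec N (\<lambda>i. if i = 0 then 0 else c $ (i - 1))"
    have x: "x \<in> carrier_vec N" unfolding x_def by auto
    have dx: "drop_first x = c" using c N1 unfolding x_def drop_first_def by (intro eq_vecI) auto
    have x0: "x $ 0 = 0" using N1 unfolding x_def by auto
    have "transpose_mat F *\<^sub>v x = 0\<^sub>v p" using split[OF x] dx x0 t0 t_def f1 by (simp add: zero_smult_vec)
    then have "x = 0\<^sub>v N" using Kker x by blast
    then have "c = drop_first (0\<^sub>v N)" using dx by simp
    then show ?thesis by (intro eq_vecI) (auto simp: drop_first_def)
  qed
  obtain M1 where M1: "M1 \<in> carrier_mat (N - 1) (N - 1)" "K1 * M1 = 1\<^sub>m (N - 1)" "M1 * K1 = 1\<^sub>m (N - 1)"
    using kernel_ex[OF K1 K1ker] by auto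
  have minvK1: "minv K1 \<in> carrier_mat (N - 1) (N - 1) \<and> K1 * minv K1 = 1\<^sub>m (N - 1) \<and> minv K1 * K1 = 1\<^sub>m (N - 1)"
    using minv_props[OF K1 M1] .
  define r where "r = G - F *\<^sub>v theta0"
  have r: "r \<in> carrier_vec N" unfolding r_def using G_dim F theta0_dim by auto
  define v where "v = minv K *\<^sub>v r"
  have v: "v \<in> carrier_vec N" unfolding v_def using minvK r by auto
  have Kv: "K *\<^sub>v v = r"
  proof -
    have "K *\<^sub>v v = (K * minv K) *\<^sub>v r" unfolding v_def
      using assoc_mult_mat_vec[OF K _ r, of "minv K"] minvK by simp
    also have "\<dots> = r" using minvK one_mult_mat_vec[OF r] by simp
    finally show ?thesis .
  qed
  define r1 where "r1 = drop_first G - F1 *\<^sub>v theta0"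
  have r1: "r1 = drop_first r" unfolding r1_def r_def F1_def
    using drop_minus[OF G_dim, of "F *\<^sub>v theta0"] drop_mult[OF F theta0_dim] F theta0_dim by simp
  have r1c: "r1 \<in> carrier_vec (N - 1)" unfolding r1 using drop_first_carrier[OF r] .
  define w where "w = minv K1 *\<^sub>v r1"
  have w: "w \<in> carrier_vec (N - 1)" unfolding w_def using minvK1 r1c by auto
  have K1w: "K1 *\<^sub>v w = r1"
  proof -
    have "K1 *\<^sub>v w = (K1 * minv K1) *\<^sub>v r1" unfolding w_def
      using assoc_mult_mat_vec[OF K1 _ r1c, of "minv K1"] minvK1 by simp
    also have "\<dots> = r1" using minvK1 one_mult_mat_vec[OF r1c] by simp
    finally show ?thesis .
  qed
  have tr: "trained F G theta0 = theta0 + transpose_mat F *\<^sub>v v"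
    unfolding trained_def pinv_def K_def[symmetric] r_def[symmetric] v_def
    using assoc_mult_mat_vec[of "transpose_mat F" p N "minv K" N r] F minvK r by auto
  have tr1: "trained F1 (drop_first G) theta0 = theta0 + transpose_mat F1 *\<^sub>v w"
    unfolding trained_def pinv_def K1_def[symmetric] r1_def[symmetric] w_def
    using assoc_mult_mat_vec[of "transpose_mat F1" p "N - 1" "minv K1" "N - 1" r1] F1 minvK1 r1c by auto
  define D where "D = transpose_mat F *\<^sub>v v - transpose_mat F1 *\<^sub>v w"
  have D: "D \<in> carrier_vec p" unfolding D_def using F F1 v w by auto
  have stab: "stability N p phi zs G theta0 z = phi z \<bullet> D" if z: "z \<in> carrier_vec d" for z
  proof -
    have pz: "phi z \<in> carrier_vec p" using phi_dim z .
    have a1: "transpose_mat F *\<^sub>v v \<in> carrier_vec p" using F v by auto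
    have a2: "transpose_mat F1 *\<^sub>v w \<in> carrier_vec p" using F1 w by auto
    show ?thesis unfolding stability_def fmodel_def F_def[symmetric] F1_def[symmetric] tr tr1 D_def
      using scalar_prod_add_distrib[OF pz theta0_dim a1] scalar_prod_add_distrib[OF pz theta0_dim a2]
        scalar_prod_minus_distrib[OF pz a1 a2] by simp
  qed
  have FD: "F1 *\<^sub>v D = 0\<^sub>v (N - 1)"
  proof -
    have "F1 *\<^sub>v (transpose_mat F *\<^sub>v v) = drop_first (K *\<^sub>v v)"
      unfolding F1_def K_def using drop_mult[OF F, of "transpose_mat F *\<^sub>v v"] F v
      by (simp add: assoc_mult_mat_vec)
    moreover have "F1 *\<^sub>v (transpose_mat F1 *\<^sub>v w) = K1 *\<^sub>v w"
      unfolding K1_def using F1 w by (simp add: assoc_mult_mat_vec)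
    ultimately have "F1 *\<^sub>v D = drop_first r - drop_first r"
      unfolding D_def using mult_minus_distrib_mat_vec[OF F1, of "transpose_mat F *\<^sub>v v" "transpose_mat F1 *\<^sub>v w"]
        F F1 v w Kv K1w r1 by simp
    then show ?thesis using drop_first_carrier[OF r] by (intro eq_vecI) auto
  qed
  define a where "a = transpose_mat F1 *\<^sub>v (drop_first v - w)"
  have ac: "a \<in> carrier_vec p" unfolding a_def using F1 w drop_first_carrier[OF v] by auto
  have Dj: "D $ j = v $ 0 * f1 $ j + a $ j" if j: "j < p" for j
  proof -
    have dv: "drop_first v \<in> carrier_vec (N - 1)" using drop_first_carrier[OF v] .
    have "a = transpose_mat F1 *\<^sub>v drop_first v - transpose_mat F1 *\<^sub>v w"
      unfolding a_def using mult_minus_distrib_mat_vec[of "transpose_mat F1" p "N - 1"] F1 dv w by auto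
    then show ?thesis unfolding D_def using split[OF v] j F F1 f1 by simp
  qed
  have Pa: "P *\<^sub>v a = a"
  proof -
    have "a \<in> row_span F1" unfolding row_span_def a_def using F1 drop_first_carrier[OF v] w by auto
    then obtain x where x: "x \<in> carrier_vec p" "a = P *\<^sub>v x" using Prange by blast
    have "P *\<^sub>v a = (P * P) *\<^sub>v x" using x assoc_mult_mat_vec[OF Pc Pc x(1)] by simp
    then show ?thesis using PP x by simp
  qed
  define y where "y = P *\<^sub>v D"
  have yc: "y \<in> carrier_vec p" unfolding y_def using Pc D by auto
  have y0: "y = 0\<^sub>v p"
  proof -
    have "y \<in> row_span F1" using Prange D unfolding y_def by blast
    then obtain c where c: "c \<in> carrier_vec (N - 1)" "y = transpose_mat F1 *\<^sub>v c"
      unfolding row_span_def using F1 by auto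
    have yD: "y \<bullet> D = 0" using transpose_vec_mult_scalar[OF F1 D c(1)] c FD by simp
    have "transpose_mat P *\<^sub>v y = y" unfolding PT y_def
      using assoc_mult_mat_vec[OF Pc Pc D] PP by simp
    then have "y \<bullet> y = y \<bullet> D" using transpose_vec_mult_scalar[OF Pc D yc] unfolding y_def by simp
    then show ?thesis using yD dot_self_zero yc by simp
  qed
  define u where "u = (1\<^sub>m p - P) *\<^sub>v f1"
  have u_eq: "u = f1 - P *\<^sub>v f1" unfolding u_def
    using minus_mult_distrib_mat_vec[of "1\<^sub>m p" p p P f1] Pc f1 by simp
  have uc: "u \<in> carrier_vec p" unfolding u_eq using f1 Pc by auto
  have PD: "P *\<^sub>v D = v $ 0 \<cdot>\<^sub>v (P *\<^sub>v f1) + a"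
  proof -
    have "D = v $ 0 \<cdot>\<^sub>v f1 + a" using Dj D f1 ac by (intro eq_vecI) auto
    then show ?thesis using mult_add_distrib_mat_vec[OF Pc, of "v $ 0 \<cdot>\<^sub>v f1" a]
        mult_mat_vec[OF Pc f1] f1 ac Pa by simp
  qed
  have Du: "D = v $ 0 \<cdot>\<^sub>v u"
  proof (rule eq_vecI)
    fix j assume "j < dim_vec (v $ 0 \<cdot>\<^sub>v u)"
    then have j: "j < p" using uc by simp
    have "(P *\<^sub>v D) $ j = 0" using y0 j unfolding y_def by simp
    then have "v $ 0 * (P *\<^sub>v f1) $ j + a $ j = 0" unfolding PD using j Pc ac by simp
    then show "D $ j = (v $ 0 \<cdot>\<^sub>v u) $ j" using Dj[OF j] j Pc f1 unfolding u_eq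
      by (simp add: algebra_simps)
  qed (use D uc in simp)
  have Pu: "P *\<^sub>v u = 0\<^sub>v p"
  proof -
    have "P *\<^sub>v u = P *\<^sub>v f1 - P *\<^sub>v (P *\<^sub>v f1)" unfolding u_eq
      using mult_minus_distrib_mat_vec[OF Pc f1, of "P *\<^sub>v f1"] Pc f1 mult_mat_vec_carrier[OF Pc f1] by simp
    also have "P *\<^sub>v (P *\<^sub>v f1) = P *\<^sub>v f1" using assoc_mult_mat_vec[OF Pc Pc f1] PP by simp
    finally show ?thesis using Pc by (intro eq_vecI) auto
  qed
  have uu: "u \<bullet> u = f1 \<bullet> u"
  proof -
    have "(P *\<^sub>v f1) \<bullet> u = 0" using transpose_vec_mult_scalar[OF Pc uc f1] PT Pu f1 by simp
    moreover have "u \<bullet> u = f1 \<bullet> u - (P *\<^sub>v f1) \<bullet> u"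
    proof -
      have pf: "P *\<^sub>v f1 \<in> carrier_vec p" using Pc f1 by simp
      have "u \<bullet> (f1 - P *\<^sub>v f1) = u \<bullet> f1 - u \<bullet> (P *\<^sub>v f1)"
        by (rule scalar_prod_minus_distrib[OF uc f1 pf])
      then have "u \<bullet> u = u \<bullet> f1 - u \<bullet> (P *\<^sub>v f1)" by (simp only: u_eq[symmetric])
      then show ?thesis using comm_scalar_prod[OF uc f1] comm_scalar_prod[OF uc pf] by simp
    qed
    ultimately show ?thesis by simp
  qed
  have uu0: "u \<bullet> u \<noteq> 0"
  proof
    assume "u \<bullet> u = 0"
    then have "u = 0\<^sub>v p" using dot_self_zero uc by simp
    then have "f1 = P *\<^sub>v f1"
    proof (intro eq_vecI)
      fix j assume "j < dim_vec (P *\<^sub>v f1)"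
      then have j: "j < p" using Pc by simp
      assume u0: "u = 0\<^sub>v p"
      have "u $ j = 0" using u0 j by simp
      then have "f1 $ j - (P *\<^sub>v f1) $ j = 0" using u_eq j f1 Pc by simp
      then show "f1 $ j = (P *\<^sub>v f1) $ j" by simp
    qed (use f1 Pc in simp)
    then have "f1 \<in> row_span F1" using Prange f1 by auto
    then obtain c where c: "c \<in> carrier_vec (N - 1)" "f1 = transpose_mat F1 *\<^sub>v c"
      unfolding row_span_def using F1 by auto
    define x where "x = vec N (\<lambda>i. if i = 0 then -1 else c $ (i - 1))"
    have x: "x \<in> carrier_vec N" unfolding x_def by auto
    have dx: "drop_first x = c" using c N1 unfolding x_def drop_first_def by (intro eq_vecI) auto
    have x0: "x $ 0 = -1" using N1 unfolding x_def by auto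
    have e: "transpose_mat F *\<^sub>v x = (-1) \<cdot>\<^sub>v f1 + f1" using split[OF x] dx x0 c(2) by simp
    moreover have "(-1) \<cdot>\<^sub>v f1 + f1 = 0\<^sub>v p" using f1 by (intro eq_vecI) auto
    ultimately have "transpose_mat F *\<^sub>v x = 0\<^sub>v p" by simp
    then have "x = 0\<^sub>v N" using Kker x by blast
    then show False using x0 N1 by simp
  qed
  have vn: "vnorm u \<noteq> 0" unfolding vnorm_def using uu0 dot_self_nonneg[of u] by simp
  have vn2: "(vnorm u)\<^sup>2 = u \<bullet> u" unfolding vnorm_def using dot_self_nonneg[of u] by simp
  have z0: "zs 0 \<in> carrier_vec d" using zs_dim N1 by simp
  show ?thesis
  proof (intro conjI ballI)
    show "vnorm ((1\<^sub>m p - P) *\<^sub>v phi (zs 0)) \<noteq> 0" using vn unfolding u_def f1_def .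
  next
    fix z :: "real vec" assume z: "z \<in> carrier_vec d"
    have pz: "phi z \<in> carrier_vec p" using phi_dim z .
    have s1: "stability N p phi zs G theta0 z = v $ 0 * (phi z \<bullet> u)"
      unfolding stab[OF z] Du using pz uc by simp
    have s0: "stability N p phi zs G theta0 (zs 0) = v $ 0 * (u \<bullet> u)"
      unfolding stab[OF z0] Du f1_def[symmetric] uu using f1 uc by simp
    show "stability N p phi zs G theta0 z
         = (phi z \<bullet> ((1\<^sub>m p - P) *\<^sub>v phi (zs 0))) / (vnorm ((1\<^sub>m p - P) *\<^sub>v phi (zs 0)))\<^sup>2
           * stability N p phi zs G theta0 (zs 0)"
      unfolding f1_def[symmetric] u_def[symmetric] s1 s0 vn2 using uu0 by (simp add: field_simps)
  qed
qed
end
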